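(* Let $n\ge 27$, $\mathcal{X},\mathcal{Y}$ finite with $|\mathcal{X}|,|\mathcal{Y}|\ge 2$, $\mathbf{X}$ a random vector on $\mathcal{X}^n$ and $\mathbf{Y}$ with $\mathbf{Y}|\mathbf{X}\sim p^n_{Y|X}$. Let $\lambda>0$ and $t\in\mathbb{N}_+$ with $\lambda t>n\log_2|\mathcal{Y}|$, and for $s\in[0:t]$ let $\mathcal{S}_{\mathbf{Y}}(s)=\{\mathbf{y}:p_{\mathbf{Y}}(\mathbf{y})>0,\ \lfloor\min(h_{\mathbf{Y}}(\mathbf{y})/\lambda,t)\rfloor=s\}$ and $\eta_s=p_{\mathbf{Y}}\left(\bigcup_{i=0}^s\mathcal{S}_{\mathbf{Y}}(i)\right)$. Then for each $s\in[0:t]$, $\bigcup_{i=0}^s\mathcal{S}_{\mathbf{Y}}(i)$ is the unique minimum $\eta_s$-quasi image of $\mathbf{X}$ by $p_{Y|X}$, and $$\log_2\bar g^n_{Y|X}(\mathbf{X},\eta_s)<s\lambda+\lambda+\log_2(t+1),\qquad \log_2\bar g^n_{Y|X}(\mathbf{X},\eta_s)\ge s\lambda+\log_2 p_{\mathbf{Y}}(\mathcal{S}_{\mathbf{Y}}(s)).$$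
   Context: $h_{\mathbf{Y}}(\mathbf{y})=-\log_2 p_{\mathbf{Y}}(\mathbf{y})$. For $\eta\in(0,1]$, a set $\mathcal{B}\subseteq\mathcal{Y}^n$ is an $\eta$-quasi image of $\mathbf{X}$ by $p_{Y|X}$ if $\sum_{\mathbf{x}}p^n_{Y|X}(\mathcal{B}|\mathbf{x})p_{\mathbf{X}}(\mathbf{x})\ge\eta$; $\bar g^n_{Y|X}(\mathbf{X},\eta)$ is the minimum cardinality of such a set, and a minimum $\eta$-quasi image is one achieving it. *)

theory Defs
  imports "HOL-Analysis.Analysis"
begin

definition seqs :: "nat \<Rightarrow> 'a list set" where
  "seqs n = {xs. length xs = n}"

text \<open>Memoryless channel: W x y = p_{Y|X}(y|x); product channel p^n_{Y|X}(ys|xs).\<close>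
definition chan_n :: "('a \<Rightarrow> 'b \<Rightarrow> real) \<Rightarrow> 'a list \<Rightarrow> 'b list \<Rightarrow> real" where
  "chan_n W xs ys = (\<Prod>i<length xs. W (xs ! i) (ys ! i))"

definition outp :: "nat \<Rightarrow> ('a list \<Rightarrow> real) \<Rightarrow> ('a \<Rightarrow> 'b \<Rightarrow> real) \<Rightarrow> 'b list \<Rightarrow> real" where
  "outp n pX W ys = (\<Sum>xs\<in>seqs n. pX xs * chan_n W xs ys)"

definition selfinfo :: "nat \<Rightarrow> ('a list \<Rightarrow> real) \<Rightarrow> ('a \<Rightarrow> 'b \<Rightarrow> real) \<Rightarrow> 'b list \<Rightarrow> real" where
  "selfinfo n pX W ys = - log 2 (outp n pX W ys)"

definition quasi_image :: "nat \<Rightarrow> ('a list \<Rightarrow> real) \<Rightarrow> ('a \<Rightarrow> 'b \<Rightarrow> real) \<Rightarrow> real \<Rightarrow> 'b list set \<Rightarrow> bool" where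
  "quasi_image n pX W eta B \<longleftrightarrow> B \<subseteq> seqs n \<and>
     (\<Sum>xs\<in>seqs n. (\<Sum>ys\<in>B. chan_n W xs ys) * pX xs) \<ge> eta"

definition gbar :: "nat \<Rightarrow> ('a list \<Rightarrow> real) \<Rightarrow> ('a \<Rightarrow> 'b \<Rightarrow> real) \<Rightarrow> real \<Rightarrow> nat" where
  "gbar n pX W eta = (LEAST k. \<exists>B. quasi_image n pX W eta B \<and> card B = k)"

definition min_quasi_image :: "nat \<Rightarrow> ('a list \<Rightarrow> real) \<Rightarrow> ('a \<Rightarrow> 'b \<Rightarrow> real) \<Rightarrow> real \<Rightarrow> 'b list set \<Rightarrow> bool" where
  "min_quasi_image n pX W eta B \<longleftrightarrow> quasi_image n pX W eta B \<and> card B = gbar n pX W eta"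

definition Sset :: "nat \<Rightarrow> ('a list \<Rightarrow> real) \<Rightarrow> ('a \<Rightarrow> 'b \<Rightarrow> real) \<Rightarrow> real \<Rightarrow> nat \<Rightarrow> nat \<Rightarrow> 'b list set" where
  "Sset n pX W lam t s = {ys \<in> seqs n. outp n pX W ys > 0 \<and>
      \<lfloor>min (selfinfo n pX W ys / lam) (real t)\<rfloor> = int s}"

end

theory Submission
  imports Defs
begin

lemma seqs_finite: "finite (seqs n :: ('b::finite) list set)"
  using finite_lists_length_eq[of "UNIV::'b set" n] by (simp add: seqs_def)

lemma seqs_card: "card (seqs n :: ('b::finite) list set) = CARD('b) ^ n"
  using card_lists_length_eq[of "UNIV::'b set" n] by (simp add: seqs_def)

lemma seqs_Suc: "seqs (Suc m) = (\<lambda>(y,ys). y # ys) ` (UNIV \<times> seqs m)"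
  unfolding seqs_def by (auto simp: image_iff length_Suc_conv)

lemma chan_Cons: "chan_n W (x#xs) (y#ys) = W x y * chan_n W xs ys"
  unfolding chan_n_def length_Cons prod.lessThan_Suc_shift by simp

lemma chan_sum1:
  fixes W :: "'a \<Rightarrow> ('b::finite) \<Rightarrow> real"
  assumes "\<forall>x. (\<Sum>y\<in>UNIV. W x y) = 1"
  shows "(\<Sum>ys\<in>seqs (length xs). chan_n W xs ys) = 1"
proof (induction xs)
  case Nil
  have "seqs 0 = {[]::'b list}" by (auto simp: seqs_def)
  then show ?case unfolding list.size(3) by (simp add: chan_n_def)
next
  case (Cons x xs)
  have inj: "inj_on (\<lambda>(y,ys). y # ys) (UNIV \<times> seqs (length xs))"
    by (auto simp: inj_on_def)
  have "(\<Sum>ys\<in>seqs (length (x#xs)). chan_n W (x#xs) ys)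
      = (\<Sum>p\<in>UNIV \<times> seqs (length xs). chan_n W (x#xs) ((\<lambda>(y,ys). y # ys) p))"
    by (simp add: seqs_Suc sum.reindex[OF inj])
  also have "\<dots> = (\<Sum>y\<in>UNIV. \<Sum>ys\<in>seqs (length xs). W x y * chan_n W xs ys)"
    by (simp add: sum.cartesian_product chan_Cons split_def)
  also have "\<dots> = (\<Sum>y\<in>UNIV. W x y)"
    by (simp add: sum_distrib_left[symmetric] Cons.IH)
  finally show ?case using assms by simp
qed

lemma outp_total:
  fixes W :: "('a::finite) \<Rightarrow> ('b::finite) \<Rightarrow> real" and pX :: "'a list \<Rightarrow> real"
  assumes "(\<Sum>xs\<in>seqs n. pX xs) = 1" "\<forall>x. (\<Sum>y\<in>UNIV. W x y) = 1"
  shows "(\<Sum>ys\<in>seqs n. outp n pX W ys) = 1"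
proof -
  have "(\<Sum>ys\<in>seqs n. outp n pX W ys) = (\<Sum>xs\<in>seqs n. pX xs * (\<Sum>ys\<in>seqs n. chan_n W xs ys))"
    unfolding outp_def sum_distrib_left by (rule sum.swap)
  also have "\<dots> = (\<Sum>xs\<in>seqs n. pX xs)"
  proof (rule sum.cong[OF refl])
    fix xs :: "'a list" assume "xs \<in> seqs n"
    then have "length xs = n" by (simp add: seqs_def)
    then have "(\<Sum>ys\<in>seqs n. chan_n W xs ys) = 1" using chan_sum1[OF assms(2), of xs] by simp
    then show "pX xs * (\<Sum>ys\<in>seqs n. chan_n W xs ys) = pX xs" by simp
  qed
  finally show ?thesis using assms by simp
qed

lemma outp_nonneg:
  assumes "\<forall>xs. pX xs \<ge> 0" "\<forall>x y. W x y \<ge> 0"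
  shows "outp n pX W ys \<ge> 0"
  unfolding outp_def chan_n_def using assms by (auto intro!: sum_nonneg mult_nonneg_nonneg prod_nonneg)

lemma quasi_sum: "(\<Sum>xs\<in>seqs n. (\<Sum>ys\<in>B. chan_n W xs ys) * pX xs) = (\<Sum>ys\<in>B. outp n pX W ys)"
  unfolding outp_def sum_distrib_right by (subst sum.swap) (simp add: mult.commute)

lemma min_unique:
  fixes P :: "'c \<Rightarrow> real"
  assumes fin: "finite A" and UA: "U \<subseteq> A" and nn: "\<forall>z\<in>A. P z \<ge> 0"
    and pos: "\<forall>u\<in>U. P u > 0" and sep: "\<forall>u\<in>U. \<forall>z\<in>A-U. P z < P u"
    and BA: "B \<subseteq> A" and ge: "sum P B \<ge> sum P U" and cardle: "card B \<le> card U"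
  shows "B = U"
proof (rule ccontr)
  assume ne: "B \<noteq> U"
  have finU: "finite U" and finB: "finite B" using fin UA BA finite_subset by auto
  have UB: "U - B \<noteq> {}"
  proof
    assume "U - B = {}"
    then have "U \<subseteq> B" by blast
    then have "U = B" using card_subset_eq[OF finB] cardle le_antisym card_mono[OF finB] by metis
    then show False using ne by simp
  qed
  define m where "m = Min (P ` (U - B))"
  have finUB: "finite (U - B)" using finU by simp
  have "m \<in> P ` (U - B)" unfolding m_def using finUB UB by (intro Min_in) auto
  then obtain u0 where u0: "u0 \<in> U - B" "m = P u0" by auto
  have mle: "\<And>u. u \<in> U - B \<Longrightarrow> m \<le> P u" unfolding m_def using finUB by simp
  have mpos: "m > 0" using u0 pos by auto
  have zlt: "\<And>z. z \<in> B - U \<Longrightarrow> P z < m" using sep u0 BA by auto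
  have c1: "card (B - U) = card B - card (B \<inter> U)" using finB by (intro card_Diff_subset_Int) simp
  have c2: "card (U - B) = card U - card (U \<inter> B)" using finU by (intro card_Diff_subset_Int) simp
  have cc: "card (B - U) \<le> card (U - B)" using c1 c2 cardle by (simp add: Int_commute)
  have "sum P (B - U) < sum P (U - B)"
  proof (cases "B - U = {}")
    case True
    have "0 < sum P (U - B)" using finUB UB pos by (intro sum_pos) auto
    then show ?thesis by (simp only: True sum.empty)
  next
    case False
    have "sum P (B - U) < real (card (B - U)) * m"
      using False finB by (intro sum_bounded_above_strict zlt) (auto simp: card_gt_0_iff)
    also have "\<dots> \<le> real (card (U - B)) * m" using cc mpos by simp
    also have "\<dots> \<le> sum P (U - B)" by (intro sum_bounded_below mle)
    finally show ?thesis .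
  qed
  moreover have "sum P B = sum P (B \<inter> U) + sum P (B - U)" using finB by (simp add: sum.Int_Diff)
  moreover have "sum P U = sum P (U \<inter> B) + sum P (U - B)" using finU by (simp add: sum.Int_Diff)
  ultimately show False using ge by (simp add: Int_commute)
qed

lemma key1:
  fixes p lam :: real and s t :: nat
  assumes "p > 0" "p \<le> 1" "lam > 0" "s \<le> t"
  shows "(\<exists>i\<le>s. \<lfloor>min (- log 2 p / lam) (real t)\<rfloor> = int i) \<longleftrightarrow>
         p > (if s < t then 2 powr (- (real s + 1) * lam) else 0)"
proof -
  have h0: "- log 2 p \<ge> 0" using assms by simp
  have "- log 2 p / lam \<ge> 0" using h0 assms(3) by (rule divide_nonneg_pos)
  then have m0: "min (- log 2 p / lam) (real t) \<ge> 0" by simp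
  then have f0: "\<lfloor>min (- log 2 p / lam) (real t)\<rfloor> \<ge> 0" by simp
  have "(\<exists>i\<le>s. \<lfloor>min (- log 2 p / lam) (real t)\<rfloor> = int i) \<longleftrightarrow>
        \<lfloor>min (- log 2 p / lam) (real t)\<rfloor> \<le> int s"
    using f0 by (metis int_nat_eq nat_le_iff of_nat_le_iff nonneg_int_cases)
  also have "\<dots> \<longleftrightarrow> min (- log 2 p / lam) (real t) < real s + 1"
    by (simp add: floor_le_iff)
  also have "\<dots> \<longleftrightarrow> p > (if s < t then 2 powr (- (real s + 1) * lam) else 0)"
  proof (cases "s < t")
    case True
    have "min (- log 2 p / lam) (real t) < real s + 1 \<longleftrightarrow> - log 2 p / lam < real s + 1"
      using True by auto
    also have "\<dots> \<longleftrightarrow> - log 2 p < (real s + 1) * lam"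
      using assms(3) by (rule pos_divide_less_eq)
    also have "\<dots> \<longleftrightarrow> - (real s + 1) * lam < log 2 p" by linarith
    also have "\<dots> \<longleftrightarrow> 2 powr (- (real s + 1) * lam) < p"
      using assms by (simp add: less_log_iff)
    finally show ?thesis using True by simp
  next
    case False
    then show ?thesis using assms by auto
  qed
  finally show ?thesis .
qed

lemma key2:
  fixes p lam :: real and s t :: nat
  assumes "p > 0" "lam > 0" "\<lfloor>min (- log 2 p / lam) (real t)\<rfloor> = int s"
  shows "p \<le> 2 powr (- real s * lam)"
proof -
  have "real s \<le> min (- log 2 p / lam) (real t)"
    using assms(3) by (metis of_int_floor_le of_int_of_nat_eq)
  then have "real s \<le> - log 2 p / lam" by simp
  then have "real s * lam \<le> - log 2 p" using pos_le_divide_eq[OF assms(2), of "real s" "- log 2 p"] by simp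
  then have "log 2 p \<le> - real s * lam" by simp
  then show ?thesis using assms(1) by (simp add: log_le_iff)
qed

theorem lemma24:
  fixes n t :: nat and lam :: real
    and pX :: "('a::finite) list \<Rightarrow> real" and W :: "'a \<Rightarrow> ('b::finite) \<Rightarrow> real"
  assumes "n \<ge> 27"
    and "CARD('a) \<ge> 2" and "CARD('b) \<ge> 2"
    and "\<forall>xs. pX xs \<ge> 0" and "(\<Sum>xs\<in>seqs n. pX xs) = 1"
    and "\<forall>x y. W x y \<ge> 0" and "\<forall>x. (\<Sum>y\<in>UNIV. W x y) = 1"
    and "lam > 0" and "t \<ge> 1"
    and "lam * real t > real n * log 2 (real CARD('b))"
  shows "\<forall>s\<le>t.
    let U = (\<Union>i\<le>s. Sset n pX W lam t i);
        eta = (\<Sum>ys\<in>U. outp n pX W ys);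
        g = gbar n pX W eta
    in (\<forall>B. min_quasi_image n pX W eta B \<longleftrightarrow> B = U)
       \<and> (g > 0 \<longrightarrow> log 2 (real g) < real s * lam + lam + log 2 (real t + 1))
       \<and> ((\<Sum>ys\<in>Sset n pX W lam t s. outp n pX W ys) > 0 \<longrightarrow>
            log 2 (real g) \<ge> real s * lam + log 2 (\<Sum>ys\<in>Sset n pX W lam t s. outp n pX W ys))"
proof (intro allI impI)
  fix s assume st: "s \<le> t"
  define P where "P = outp n pX W"
  define U where "U = (\<Union>i\<le>s. Sset n pX W lam t i)"
  define c where "c = (if s < t then 2 powr (- (real s + 1) * lam) else (0::real))"
  have c0: "c \<ge> 0" unfolding c_def by simp
  have fin: "finite (seqs n :: 'b list set)" by (rule seqs_finite)
  have nn: "\<And>y. P y \<ge> 0" unfolding P_def using assms(4,6) by (rule outp_nonneg)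
  have tot: "sum P (seqs n) = 1" unfolding P_def using assms(5,7) by (rule outp_total)
  have le1: "\<And>y. y \<in> seqs n \<Longrightarrow> P y \<le> 1"
    using member_le_sum[of _ "seqs n" P] nn fin tot by auto
  have Ueq: "U = {y \<in> seqs n. P y > c}"
  proof -
    have "y \<in> U \<longleftrightarrow> y \<in> seqs n \<and> P y > c" for y
    proof (cases "y \<in> seqs n \<and> P y > 0")
      case True
      have "y \<in> U \<longleftrightarrow> (\<exists>i\<le>s. \<lfloor>min (- log 2 (P y) / lam) (real t)\<rfloor> = int i)"
        using True unfolding U_def Sset_def selfinfo_def P_def by auto
      also have "\<dots> \<longleftrightarrow> P y > c" unfolding c_def
        using True le1 assms(8) st by (intro key1) auto
      finally show ?thesis using True by simp
    next
      case False
      then show ?thesis unfolding U_def Sset_def P_def using c0 by auto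
    qed
    then show ?thesis by auto
  qed
  have UA: "U \<subseteq> seqs n" using Ueq by auto
  have finU: "finite U" using UA fin finite_subset by auto
  have pos: "\<forall>u\<in>U. P u > 0" using Ueq c0 by auto
  have sep: "\<forall>u\<in>U. \<forall>z\<in>seqs n - U. P z < P u" using Ueq by fastforce
  have qs: "\<And>B. quasi_image n pX W eta B \<longleftrightarrow> B \<subseteq> seqs n \<and> sum P B \<ge> eta" for eta
    unfolding quasi_image_def quasi_sum P_def ..
  have uniq: "\<And>B. B \<subseteq> seqs n \<Longrightarrow> sum P B \<ge> sum P U \<Longrightarrow> card B \<le> card U \<Longrightarrow> B = U"
    using min_unique[OF fin UA _ pos sep] nn by blast
  have g: "gbar n pX W (sum P U) = card U"
    unfolding gbar_def
  proof (rule Least_equality)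
    show "\<exists>B. quasi_image n pX W (sum P U) B \<and> card B = card U"
      using qs UA by blast
    show "card U \<le> k" if hk: "\<exists>B. quasi_image n pX W (sum P U) B \<and> card B = k" for k
    proof (rule ccontr)
      assume "\<not> card U \<le> k"
      moreover obtain B where "quasi_image n pX W (sum P U) B" "card B = k" using hk by blast
      ultimately show False using uniq[of B] qs by auto
    qed
  qed
  have part1: "\<forall>B. min_quasi_image n pX W (sum P U) B \<longleftrightarrow> B = U"
  proof (intro allI iffI)
    fix B assume "min_quasi_image n pX W (sum P U) B"
    then have "B \<subseteq> seqs n" "sum P U \<le> sum P B" "card B = card U"
      unfolding min_quasi_image_def g qs by auto
    then show "B = U" using uniq by simp
  next
    fix B assume "B = U"
    then show "min_quasi_image n pX W (sum P U) B"
      unfolding min_quasi_image_def g qs using UA by simp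
  qed
  have part2: "log 2 (real (card U)) < real s * lam + lam + log 2 (real t + 1)"
    if gp: "card U > 0"
  proof -
    have lt: "log 2 (real t + 1) \<ge> 0" by simp
    show ?thesis
    proof (cases "s < t")
      case True
      then have cc: "c = 2 powr (- (real s + 1) * lam)" unfolding c_def by simp
      have "(\<Sum>u\<in>U. c) < sum P U"
      proof (rule sum_strict_mono[OF finU])
        show "U \<noteq> {}" using gp by auto
        show "c < P u" if "u \<in> U" for u using that Ueq by auto
      qed
      also have "\<dots> \<le> sum P (seqs n)" by (rule sum_mono2[OF fin UA]) (simp add: nn)
      finally have "real (card U) * 2 powr (- (real s + 1) * lam) < 1" using tot cc by simp
      moreover have "2 powr (- (real s + 1) * lam) = 1 / 2 powr ((real s + 1) * lam)"
        using powr_minus_divide[of 2 "(real s + 1) * lam"] by (simp only: mult_minus_left)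
      ultimately have "real (card U) / 2 powr ((real s + 1) * lam) < 1" by simp
      then have "real (card U) < 2 powr ((real s + 1) * lam)"
        by (simp add: pos_divide_less_eq)
      then have "log 2 (real (card U)) < (real s + 1) * lam"
        using gp by (simp add: log_less_iff)
      moreover have "(real s + 1) * lam = real s * lam + lam" by (simp add: algebra_simps)
      ultimately show ?thesis using lt by linarith
    next
      case False
      then have "s = t" using st by simp
      have "real (card U) \<le> real (card (seqs n :: 'b list set))"
        using card_mono[OF fin UA] by simp
      also have "\<dots> = real CARD('b) ^ n" by (simp add: seqs_card)
      finally have "log 2 (real (card U)) \<le> log 2 (real CARD('b) ^ n)"
        using gp by simp
      also have "\<dots> = real n * log 2 (real CARD('b))" by (simp add: log_nat_power)
      finally have A: "log 2 (real (card U)) \<le> real n * log 2 (real CARD('b))" .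
      have "real s * lam = lam * real t" using \<open>s = t\<close> by simp
      then show ?thesis using A assms(10) lt assms(8) by linarith
    qed
  qed
  have part3: "log 2 (real (card U)) \<ge> real s * lam + log 2 (sum P (Sset n pX W lam t s))"
    if sp: "sum P (Sset n pX W lam t s) > 0"
  proof -
    let ?S = "Sset n pX W lam t s"
    have SU: "?S \<subseteq> U" unfolding U_def using st by auto
    have finS: "finite ?S" using SU finU finite_subset by auto
    have "?S \<noteq> {}" using sp by auto
    then have cardS: "card ?S > 0" using finS by (simp add: card_gt_0_iff)
    have cU: "card ?S \<le> card U" using card_mono[OF finU SU] .
    have "sum P ?S \<le> real (card ?S) * 2 powr (- real s * lam)"
    proof (rule sum_bounded_above)
      fix y assume "y \<in> ?S"
      then have py: "P y > 0" and fl: "\<lfloor>min (- log 2 (P y) / lam) (real t)\<rfloor> = int s"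
        unfolding Sset_def selfinfo_def P_def by blast+
      show "P y \<le> 2 powr (- real s * lam)" by (rule key2[OF py assms(8) fl])
    qed
    also have "\<dots> \<le> real (card U) * 2 powr (- real s * lam)"
      using cU by (simp add: mult_right_mono)
    finally have "log 2 (sum P ?S) \<le> log 2 (real (card U) * 2 powr (- real s * lam))"
      using sp by simp
    also have "\<dots> = log 2 (real (card U)) - real s * lam"
      using cardS cU by (simp add: log_mult)
    finally show ?thesis by simp
  qed
  show "let U = (\<Union>i\<le>s. Sset n pX W lam t i);
        eta = (\<Sum>ys\<in>U. outp n pX W ys);
        g = gbar n pX W eta
    in (\<forall>B. min_quasi_image n pX W eta B \<longleftrightarrow> B = U)
       \<and> (g > 0 \<longrightarrow> log 2 (real g) < real s * lam + lam + log 2 (real t + 1))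
       \<and> ((\<Sum>ys\<in>Sset n pX W lam t s. outp n pX W ys) > 0 \<longrightarrow>
            log 2 (real g) \<ge> real s * lam + log 2 (\<Sum>ys\<in>Sset n pX W lam t s. outp n pX W ys))"
    unfolding Let_def U_def[symmetric] P_def[symmetric] g using part1 part2 part3 by blast
qed

end
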